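(* Let $\mathbf x\in\mathcal D^m$ have finite quadratic variation along $\pi$, i.e. $\mathbf q_n(t)=\sum_{i:\,t^n_i\le t}(\mathbf{x}(t^n_{i+1})-\mathbf{x}(t^n_i))(\mathbf{x}(t^n_{i+1})-\mathbf{x}(t^n_i))^T$ converges in $(\mathcal D^{m\times m},d)$ to a limit $[\mathbf x]_\pi$. Then: (i) $\mathbf q_n\to[\mathbf x]_\pi$ locally uniformly on $[0,\infty)$ if and only if $\mathbf x$ is continuous; (ii) $F(\mathbf q_n)\to F([\mathbf x]_\pi)$ for every functional $F$ on $\mathcal D^{m\times m}$ which is $J_1$-continuous at $[\mathbf x]_\pi$.
   Context: Let $\pi=(\pi_n)_{n\ge1}$ be a sequence of partitions $\pi_n=(t^n_0,\dots,t^n_{k_n})$ with $0=t^n_0<\dots<t^n_{k_n}<\infty$, $t^n_{k_n}\uparrow\infty$, and mesh tending to $0$ on compacts; sums over $i$ run over $0\le i<k_n$. $\mathcal D^m$, $\mathcal D^{m\times m}$ denote the spaces of càdlàg functions $[0,\infty)\to\mathbb R^m$, resp. $\mathbb R^{m\times m}$, each with a metric $d$ inducing the Skorokhod $J_1$ topology. *)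

theory Defs
  imports "HOL-Analysis.Analysis"
begin

text \<open>Functions on the time axis are modelled as total functions on real;
only their values on [0,\<infinity>) matter.\<close>

definition cadlag :: "(real \<Rightarrow> 'a::metric_space) \<Rightarrow> bool" where
  "cadlag f \<longleftrightarrow> (\<forall>t\<ge>0. continuous (at_right t) f) \<and>
                 (\<forall>t>0. \<exists>l. (f \<longlongrightarrow> l) (at_left t))"

definition time_change :: "(real \<Rightarrow> real) \<Rightarrow> bool" where
  "time_change l \<longleftrightarrow> continuous_on {0..} l \<and> strict_mono_on {0..} l \<and>
                      bij_betw l {0..} {0..}"

text \<open>Convergence of a sequence in the Skorokhod J1 topology on D[0,\<infinity>)
  (Jacod--Shiryaev, Thm. VI.1.14).\<close>
definition J1_conv :: "(nat \<Rightarrow> real \<Rightarrow> 'a::metric_space) \<Rightarrow> (real \<Rightarrow> 'a) \<Rightarrow> bool" where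
  "J1_conv ys y \<longleftrightarrow> (\<exists>l::nat \<Rightarrow> real \<Rightarrow> real.
      (\<forall>n. time_change (l n)) \<and>
      uniform_limit {0..} l (\<lambda>t. t) sequentially \<and>
      (\<forall>T\<ge>0. uniform_limit {0..T} (\<lambda>n t. ys n (l n t)) y sequentially))"

text \<open>Open sets of the J1 topology on the Skorokhod space (this topology is
  metrizable, hence determined by its convergent sequences).\<close>
definition J1_open :: "(real \<Rightarrow> 'a::metric_space) set \<Rightarrow> bool" where
  "J1_open U \<longleftrightarrow> U \<subseteq> {f. cadlag f} \<and>
     (\<forall>y\<in>U. \<forall>ys. (\<forall>n. cadlag (ys n)) \<and> J1_conv ys y \<longrightarrow> (\<forall>\<^sub>F n in sequentially. ys n \<in> U))"

definition J1_continuous_at :: "((real \<Rightarrow> 'a::metric_space) \<Rightarrow> real) \<Rightarrow> (real \<Rightarrow> 'a) \<Rightarrow> bool" where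
  "J1_continuous_at F y \<longleftrightarrow>
     (\<forall>e>0. \<exists>U. J1_open U \<and> y \<in> U \<and> (\<forall>z\<in>U. \<bar>F z - F y\<bar> < e))"

definition mesh_on :: "(nat \<Rightarrow> real) \<Rightarrow> nat \<Rightarrow> real \<Rightarrow> real" where
  "mesh_on p k T = Max ({p (Suc i) - p i | i. i < k \<and> p i \<le> T} \<union> {0})"

definition partition_seq :: "(nat \<Rightarrow> nat \<Rightarrow> real) \<Rightarrow> (nat \<Rightarrow> nat) \<Rightarrow> bool" where
  "partition_seq t k \<longleftrightarrow>
     (\<forall>n. t n 0 = 0) \<and>
     (\<forall>n i. i < k n \<longrightarrow> t n i < t n (Suc i)) \<and>
     incseq (\<lambda>n. t n (k n)) \<and> filterlim (\<lambda>n. t n (k n)) at_top sequentially \<and>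
     (\<forall>T>0. (\<lambda>n. mesh_on (t n) (k n) T) \<longlonglongrightarrow> 0)"

definition outer :: "real^'m \<Rightarrow> real^'m \<Rightarrow> real^'m^'m" where
  "outer v w = (\<chi> i j. v$i * w$j)"

definition qv_n :: "(nat \<Rightarrow> nat \<Rightarrow> real) \<Rightarrow> (nat \<Rightarrow> nat) \<Rightarrow> (real \<Rightarrow> real^'m) \<Rightarrow> nat \<Rightarrow> real \<Rightarrow> real^'m^'m" where
  "qv_n t k x n s = (\<Sum>i\<in>{i. i < k n \<and> t n i \<le> s}.
       outer (x (t n (Suc i)) - x (t n i)) (x (t n (Suc i)) - x (t n i)))"

end

theory Submission
  imports Defs
begin


lemma step_right:
  fixes p :: "nat \<Rightarrow> real"
  assumes "finite I"
  shows "eventually (\<lambda>y. {i\<in>I. p i \<le> y} = {i\<in>I. p i \<le> s}) (at_right s)"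
proof -
  have "\<forall>i\<in>I. eventually (\<lambda>y. (p i \<le> y) = (p i \<le> s)) (at_right s)"
  proof
    fix i assume "i \<in> I"
    show "eventually (\<lambda>y. (p i \<le> y) = (p i \<le> s)) (at_right s)"
    proof (cases "p i \<le> s")
      case True
      then show ?thesis
        by (auto simp: eventually_at_filter intro!: always_eventually)
    next
      case False
      then have "s < p i" by simp
      then show ?thesis unfolding eventually_at_right[OF \<open>s < p i\<close>]
        using False by (intro exI[of _ "p i"]) auto
    qed
  qed
  from eventually_ball_finite[OF assms this] show ?thesis
    by (rule eventually_mono) auto
qed

lemma step_left:
  fixes p :: "nat \<Rightarrow> real"
  assumes "finite I"
  shows "eventually (\<lambda>y. {i\<in>I. p i \<le> y} = {i\<in>I. p i < s}) (at_left s)"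
proof -
  have "\<forall>i\<in>I. eventually (\<lambda>y. (p i \<le> y) = (p i < s)) (at_left s)"
  proof
    fix i assume "i \<in> I"
    show "eventually (\<lambda>y. (p i \<le> y) = (p i < s)) (at_left s)"
    proof (cases "p i < s")
      case True
      then show ?thesis unfolding eventually_at_left[OF True]
        by (intro exI[of _ "p i"]) auto
    next
      case False
      then show ?thesis
        by (auto simp: eventually_at_filter intro!: always_eventually)
    qed
  qed
  from eventually_ball_finite[OF assms this] show ?thesis
    by (rule eventually_mono) auto
qed

lemma qv_set: "{i. i < k n \<and> t n i \<le> s} = {i\<in>{..<k n}. t n i \<le> s}" by auto

lemma cadlag_qv: "cadlag (qv_n t k x n)"
  unfolding cadlag_def
proof safe
  fix s :: real
  have ev: "eventually (\<lambda>y. qv_n t k x n s = qv_n t k x n y) (at_right s)"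
    using step_right[OF finite_lessThan[of "k n"], of "t n" s]
    by (rule eventually_mono) (simp only: qv_n_def qv_set)
  show "continuous (at_right s) (qv_n t k x n)"
    unfolding continuous_within by (rule Lim_transform_eventually[OF tendsto_const ev])
next
  fix s :: real
  let ?l = "\<Sum>i\<in>{i\<in>{..<k n}. t n i < s}.
       outer (x (t n (Suc i)) - x (t n i)) (x (t n (Suc i)) - x (t n i))"
  have "eventually (\<lambda>y. ?l = qv_n t k x n y) (at_left s)"
    using step_left[OF finite_lessThan[of "k n"], of "t n" s]
    by (rule eventually_mono) (simp only: qv_n_def qv_set)
  then show "\<exists>l. (qv_n t k x n \<longlongrightarrow> l) (at_left s)"
    by (intro exI[of _ ?l] Lim_transform_eventually[OF tendsto_const])
qed

lemma part2:
  assumes "J1_conv (qv_n t k x) Q" "J1_continuous_at F Q"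
  shows "(\<lambda>n. F (qv_n t k x n)) \<longlonglongrightarrow> F Q"
proof (rule LIMSEQ_I)
  fix r :: real assume "r > 0"
  then obtain U where U: "J1_open U" "Q \<in> U" "\<forall>z\<in>U. \<bar>F z - F Q\<bar> < r"
    using assms(2) unfolding J1_continuous_at_def by blast
  have "eventually (\<lambda>n. qv_n t k x n \<in> U) sequentially"
    using U(1,2) assms(1) cadlag_qv unfolding J1_open_def by blast
  then obtain N where "\<forall>n\<ge>N. qv_n t k x n \<in> U" by (auto simp: eventually_sequentially)
  then show "\<exists>N. \<forall>n\<ge>N. norm (F (qv_n t k x n) - F Q) < r" using U(3) by auto
qed

lemma norm_outer: "norm (outer v v) = norm v * norm (v::real^'m)"
proof -
  have r: "outer v v $ i = v $ i *\<^sub>R v" for i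
    by (simp add: outer_def vec_eq_iff)
  have "norm (outer v v) = sqrt (\<Sum>i\<in>UNIV. (\<bar>v$i\<bar> * norm v)\<^sup>2)"
    unfolding norm_vec_def[of "outer v v"] L2_set_def r norm_scaleR
    by (simp add: norm_vec_def[symmetric])
  also have "\<dots> = sqrt ((norm v)\<^sup>2 * (\<Sum>i\<in>UNIV. (v$i)\<^sup>2))"
    by (simp add: power_mult_distrib sum_distrib_left mult.commute)
  also have "(\<Sum>i\<in>UNIV. (v$i)\<^sup>2) = (norm v)\<^sup>2"
    by (simp add: norm_vec_def L2_set_def sum_nonneg)
  finally have "norm (outer v v) = sqrt ((norm v * norm v)\<^sup>2)"
    by (simp add: power2_eq_square)
  then show ?thesis by simp
qed

lemma outer_diag: "outer v v $ j $ j = (v $ j)\<^sup>2"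
  by (simp add: outer_def power2_eq_square)



lemma ps_strict:
  assumes "partition_seq t k" "i < j" "j \<le> k n"
  shows "t n i < t n j"
  using assms(2,3)
proof (induction j)
  case 0 then show ?case by simp
next
  case (Suc j)
  have "t n j < t n (Suc j)" using assms(1) Suc.prems unfolding partition_seq_def by auto
  then show ?case using Suc by (cases "i = j") auto
qed

lemma ps_nonneg:
  assumes "partition_seq t k" "i \<le> k n"
  shows "0 \<le> t n i"
proof (cases "i = 0")
  case True then show ?thesis using assms(1) unfolding partition_seq_def by simp
next
  case False
  then have "t n 0 < t n i" using ps_strict[OF assms(1), of 0 i n] assms(2) by simp
  then show ?thesis using assms(1) unfolding partition_seq_def by simp
qed

lemma ps_inj:
  assumes "partition_seq t k" "i \<le> k n" "j \<le> k n" "t n i = t n j"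
  shows "i = j"
  using ps_strict[OF assms(1), of i j n] ps_strict[OF assms(1), of j i n] assms
  by (cases i j rule: linorder_cases) auto

lemma mesh_ge:
  assumes "i < kk" "p i \<le> T"
  shows "p (Suc i) - p i \<le> mesh_on p kk T"
proof -
  have fin: "finite ({p (Suc i) - p i | i. i < kk \<and> p i \<le> T} \<union> {0})"
  proof -
    have "{p (Suc i) - p i | i. i < kk \<and> p i \<le> T} \<subseteq> (\<lambda>i. p (Suc i) - p i) ` {..<kk}"
      by auto
    then show ?thesis by (auto intro: finite_subset)
  qed
  show ?thesis unfolding mesh_on_def
    by (rule Max_ge[OF fin]) (use assms in auto)
qed

lemma mesh_lim:
  assumes "partition_seq t k" "T > 0"
  shows "(\<lambda>n. mesh_on (t n) (k n) T) \<longlonglongrightarrow> 0"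
  using assms unfolding partition_seq_def by blast

lemma end_large:
  assumes "partition_seq t k"
  shows "eventually (\<lambda>n. T \<le> t n (k n)) sequentially"
  using assms unfolding partition_seq_def filterlim_at_top by blast

lemma bracket:
  assumes "partition_seq t k" "s > 0" "s \<le> t n (k n)"
  shows "\<exists>i<k n. t n i < s \<and> s \<le> t n (Suc i)"
proof -
  let ?S = "{i. i \<le> k n \<and> t n i < s}"
  have fin: "finite ?S" by auto
  have "0 \<in> ?S" using assms unfolding partition_seq_def by auto
  then have ne: "?S \<noteq> {}" by blast
  define i where "i = Max ?S"
  have iS: "i \<in> ?S" unfolding i_def using Max_in[OF fin ne] .
  have "i \<noteq> k n" using iS assms(3) by auto
  then have ik: "i < k n" using iS by auto
  have "Suc i \<notin> ?S" using Max_ge[OF fin, of "Suc i"] unfolding i_def[symmetric] by auto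
  then have "s \<le> t n (Suc i)" using ik by auto
  then show ?thesis using ik iS by blast
qed

lemma diag_qv:
  "qv_n t k x n u $ j $ j = (\<Sum>i\<in>{i. i < k n \<and> t n i \<le> u}. ((x (t n (Suc i)) - x (t n i)) $ j)\<^sup>2)"
  unfolding qv_n_def sum_component outer_diag ..

lemma diag_mono:
  assumes "v < t n i" "i < k n"
  shows "qv_n t k x n v $ j $ j + ((x (t n (Suc i)) - x (t n i)) $ j)\<^sup>2 \<le> qv_n t k x n (t n i) $ j $ j"
proof -
  let ?f = "\<lambda>i. ((x (t n (Suc i)) - x (t n i)) $ j)\<^sup>2"
  have sub: "insert i {i. i < k n \<and> t n i \<le> v} \<subseteq> {i'. i' < k n \<and> t n i' \<le> t n i}"
    using assms by auto
  have ni: "i \<notin> {i. i < k n \<and> t n i \<le> v}" using assms by auto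
  have "qv_n t k x n v $ j $ j + ?f i = sum ?f (insert i {i. i < k n \<and> t n i \<le> v})"
    unfolding diag_qv using ni by (simp add: add.commute)
  also have "\<dots> \<le> sum ?f {i'. i' < k n \<and> t n i' \<le> t n i}"
    by (rule sum_mono2[OF _ sub]) auto
  finally show ?thesis unfolding diag_qv .
qed



lemma unif_imp_cont:
  assumes ps: "partition_seq t k" and cx: "cadlag x" and cQ: "cadlag Q"
    and U: "\<forall>T\<ge>0. uniform_limit {0..T} (qv_n t k x) Q sequentially"
  shows "continuous_on {0..} x"
  unfolding continuous_on_eq_continuous_within
proof
  fix s :: real assume "s \<in> {0..}"
  then have s0: "s \<ge> 0" by simp
  show "continuous (at s within {0..}) x"
  proof (cases "s = 0")
    case True
    then show ?thesis using cx unfolding cadlag_def by (simp add: at_within_Ici_at_right)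
  next
    case False
    then have sp: "s > 0" using s0 by simp
    have cr: "continuous (at_right s) x" using cx s0 unfolding cadlag_def by blast
    obtain L where L: "(x \<longlongrightarrow> L) (at_left s)" using cx sp unfolding cadlag_def by blast
    obtain QL where QL: "(Q \<longlongrightarrow> QL) (at_left s)" using cQ sp unfolding cadlag_def by blast
    have "L = x s"
    proof (rule ccontr)
      assume "L \<noteq> x s"
      then obtain j where j: "L $ j \<noteq> x s $ j" by (auto simp: vec_eq_iff)
      define c where "c = (x s $ j - L $ j)\<^sup>2"
      have cpos: "c > 0" using j unfolding c_def by simp
      have "\<forall>n. \<exists>i. s \<le> t n (k n) \<longrightarrow> i < k n \<and> t n i < s \<and> s \<le> t n (Suc i)"
        using bracket[OF ps sp] by blast
      then obtain I where I: "\<And>n. s \<le> t n (k n) \<Longrightarrow> I n < k n \<and> t n (I n) < s \<and> s \<le> t n (Suc (I n))"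
        by metis
      define a where "a n = t n (I n)" for n
      define b where "b n = t n (Suc (I n))" for n
      have evI: "eventually (\<lambda>n. I n < k n \<and> a n < s \<and> s \<le> b n) sequentially"
        using end_large[OF ps, of s] by (rule eventually_mono) (use I a_def b_def in auto)
      have ev_a0: "eventually (\<lambda>n. 0 \<le> a n) sequentially"
        using evI by (rule eventually_mono) (use ps_nonneg[OF ps] a_def in auto)
      have mesh: "eventually (\<lambda>n. b n - a n \<le> mesh_on (t n) (k n) s) sequentially"
        using evI by (rule eventually_mono) (use mesh_ge a_def b_def in auto)
      have ml: "(\<lambda>n. mesh_on (t n) (k n) s) \<longlonglongrightarrow> 0" using mesh_lim[OF ps sp] .
      have a_lim: "a \<longlonglongrightarrow> s"
      proof -
        have "(\<lambda>n. s - a n) \<longlonglongrightarrow> 0"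
        proof (rule tendsto_sandwich[OF _ _ tendsto_const ml])
          show "eventually (\<lambda>n. 0 \<le> s - a n) sequentially"
            using evI by (rule eventually_mono) auto
          show "eventually (\<lambda>n. s - a n \<le> mesh_on (t n) (k n) s) sequentially"
            using eventually_conj[OF evI mesh] by (rule eventually_mono) auto
        qed
        from tendsto_diff[OF tendsto_const[of s] this] show ?thesis by simp
      qed
      have b_lim: "b \<longlonglongrightarrow> s"
      proof -
        have "(\<lambda>n. b n - s) \<longlonglongrightarrow> 0"
        proof (rule tendsto_sandwich[OF _ _ tendsto_const ml])
          show "eventually (\<lambda>n. 0 \<le> b n - s) sequentially"
            using evI by (rule eventually_mono) auto
          show "eventually (\<lambda>n. b n - s \<le> mesh_on (t n) (k n) s) sequentially"
            using eventually_conj[OF evI mesh] by (rule eventually_mono) auto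
        qed
        then show ?thesis by (simp add: LIM_zero_iff)
      qed
      have a_fl: "filterlim a (at_left s) sequentially"
        unfolding filterlim_at using a_lim evI by (auto elim: eventually_mono)
      have xa: "(\<lambda>n. x (a n)) \<longlonglongrightarrow> L" using filterlim_compose[OF L a_fl] .
      have Qa: "(\<lambda>n. Q (a n)) \<longlonglongrightarrow> QL" using filterlim_compose[OF QL a_fl] .
      have xb: "(\<lambda>n. x (b n)) \<longlonglongrightarrow> x s"
      proof -
        define b' where "b' n = max s (b n)" for n
        have "continuous (at s within {s..}) x" using cr by (simp add: at_within_Ici_at_right)
        moreover have "b' \<longlonglongrightarrow> s" unfolding b'_def
          using tendsto_max[OF tendsto_const b_lim, of s] by simp
        moreover have "\<forall>n. b' n \<in> {s..}" unfolding b'_def by auto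
        ultimately have "(\<lambda>n. x (b' n)) \<longlonglongrightarrow> x s"
          unfolding continuous_within_sequentially comp_def by blast
        moreover have "eventually (\<lambda>n. x (b' n) = x (b n)) sequentially"
          using evI by (rule eventually_mono) (auto simp: b'_def)
        ultimately show ?thesis by (rule Lim_transform_eventually)
      qed
      have dlim: "(\<lambda>n. ((x (b n) - x (a n)) $ j)\<^sup>2) \<longlonglongrightarrow> c"
      proof -
        have "(\<lambda>n. x (b n) - x (a n)) \<longlonglongrightarrow> x s - L" by (intro tendsto_diff xa xb)
        then have "(\<lambda>n. (x (b n) - x (a n)) $ j) \<longlonglongrightarrow> (x s - L) $ j" by (rule tendsto_vec_nth)
        then show ?thesis unfolding c_def by (intro tendsto_intros) simp
      qed
      have Da: "(\<lambda>n. qv_n t k x n (a n) $ j $ j) \<longlonglongrightarrow> QL $ j $ j"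
      proof -
        have ul: "uniform_limit {0..s} (qv_n t k x) Q sequentially" using U s0 by blast
        have "(\<lambda>n. qv_n t k x n (a n) - Q (a n)) \<longlonglongrightarrow> 0"
        proof (rule LIMSEQ_I)
          fix r :: real assume "r > 0"
          then have "eventually (\<lambda>n. \<forall>u\<in>{0..s}. dist (qv_n t k x n u) (Q u) < r) sequentially"
            using ul unfolding uniform_limit_iff by blast
          then have "eventually (\<lambda>n. norm (qv_n t k x n (a n) - Q (a n) - 0) < r) sequentially"
            using eventually_conj[OF evI ev_a0] by eventually_elim (auto simp: dist_norm)
          then show "\<exists>N. \<forall>n\<ge>N. norm (qv_n t k x n (a n) - Q (a n) - 0) < r"
            by (simp add: eventually_sequentially)
        qed
        then have "(\<lambda>n. (qv_n t k x n (a n) - Q (a n)) + Q (a n)) \<longlonglongrightarrow> 0 + QL"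
          by (intro tendsto_add Qa)
        then have "(\<lambda>n. qv_n t k x n (a n)) \<longlonglongrightarrow> QL" by simp
        then show ?thesis by (intro tendsto_vec_nth)
      qed
      have key: "Q v $ j $ j + c \<le> QL $ j $ j" if v: "0 \<le> v" "v < s" for v
      proof -
        have Dv: "(\<lambda>n. qv_n t k x n v $ j $ j) \<longlonglongrightarrow> Q v $ j $ j"
        proof -
          have "uniform_limit {0..s} (qv_n t k x) Q sequentially" using U s0 by blast
          then have "(\<lambda>n. qv_n t k x n v) \<longlonglongrightarrow> Q v"
            using v by (intro tendsto_uniform_limitI) auto
          then show ?thesis by (intro tendsto_vec_nth)
        qed
        have eva: "eventually (\<lambda>n. v < a n) sequentially"
          using order_tendstoD(1)[OF a_lim v(2)] .
        show ?thesis
        proof (rule tendsto_le[OF _ Da tendsto_add[OF Dv dlim]])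
          show "sequentially \<noteq> bot" by simp
          show "eventually (\<lambda>n. qv_n t k x n v $ j $ j + ((x (b n) - x (a n)) $ j)\<^sup>2
                   \<le> qv_n t k x n (a n) $ j $ j) sequentially"
            using eventually_conj[OF evI eva] by eventually_elim
              (unfold a_def b_def, rule diag_mono, auto simp: a_def)
        qed
      qed
      have "QL $ j $ j + c \<le> QL $ j $ j"
      proof (rule tendsto_le[OF trivial_limit_at_left_real tendsto_const])
        show "((\<lambda>v. Q v $ j $ j + c) \<longlongrightarrow> QL $ j $ j + c) (at_left s)"
          by (intro tendsto_intros QL)
        have "eventually (\<lambda>v. 0 < v \<and> v < s) (at_left s)"
          unfolding eventually_at_left[OF sp] by (intro exI[of _ 0]) (use sp in auto)
        then show "eventually (\<lambda>v. Q v $ j $ j + c \<le> QL $ j $ j) (at_left s)"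
          by (rule eventually_mono) (auto intro: key)
      qed
      then show False using cpos by simp
    qed
    then have "continuous (at_left s) x" unfolding continuous_within using L by simp
    then have "isCont x s" using cr by (simp add: continuous_at_split)
    then show ?thesis by (rule continuous_at_imp_continuous_within)
  qed
qed



lemma cont_from_left:
  assumes "cadlag f" "\<And>s. s > 0 \<Longrightarrow> continuous (at_left s) f"
  shows "continuous_on {0..} f"
  unfolding continuous_on_eq_continuous_within
proof
  fix s :: real assume "s \<in> {0..}"
  then have s0: "s \<ge> 0" by simp
  have cr: "continuous (at_right s) f" using assms(1) s0 unfolding cadlag_def by blast
  show "continuous (at s within {0..}) f"
  proof (cases "s = 0")
    case True
    then show ?thesis using cr by (simp add: at_within_Ici_at_right)
  next
    case False
    then have "isCont f s" using cr assms(2) s0 by (simp add: continuous_at_split)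
    then show ?thesis by (rule continuous_at_imp_continuous_within)
  qed
qed

lemma small_incr:
  assumes ps: "partition_seq t k" and cx: "continuous_on {0..} x" and T: "T \<ge> 0" and e: "e > 0"
  shows "eventually (\<lambda>n. \<forall>i<k n. t n i \<le> T \<longrightarrow> norm (x (t n (Suc i)) - x (t n i)) < e) sequentially"
proof -
  have "uniformly_continuous_on {0..T+1} x"
    by (rule compact_uniformly_continuous[OF continuous_on_subset[OF cx]]) auto
  then obtain d where d: "d > 0" "\<And>u v. u \<in> {0..T+1} \<Longrightarrow> v \<in> {0..T+1} \<Longrightarrow> dist v u < d \<Longrightarrow> dist (x v) (x u) < e"
    unfolding uniformly_continuous_on_def using e by metis
  have "eventually (\<lambda>n. mesh_on (t n) (k n) (T+1) < min d 1) sequentially"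
    using order_tendstoD(2)[OF mesh_lim[OF ps] , of "T+1" "min d 1"] T d by simp
  then show ?thesis
  proof (rule eventually_mono, intro allI impI)
    fix n i assume m: "mesh_on (t n) (k n) (T + 1) < min d 1" and i: "i < k n" "t n i \<le> T"
    have "t n (Suc i) - t n i \<le> mesh_on (t n) (k n) (T+1)" using mesh_ge[of i "k n" "t n" "T+1"] i by simp
    moreover have "0 \<le> t n i" using ps_nonneg[OF ps, of i n] i by simp
    moreover have "t n i < t n (Suc i)" using ps i unfolding partition_seq_def by blast
    ultimately have "dist (x (t n (Suc i))) (x (t n i)) < e"
      using m i by (intro d(2)) (auto simp: dist_real_def)
    then show "norm (x (t n (Suc i)) - x (t n i)) < e" by (simp add: dist_norm)
  qed
qed

lemma Q_cont:
  assumes ps: "partition_seq t k" and cx: "continuous_on {0..} x" and cQ: "cadlag Q"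
    and l: "\<forall>n. time_change (l n)" "uniform_limit {0..} l (\<lambda>t. t) sequentially"
    and U: "\<forall>T\<ge>0. uniform_limit {0..T} (\<lambda>n u. qv_n t k x n (l n u)) Q sequentially"
  shows "continuous_on {0..} Q"
proof (rule cont_from_left[OF cQ])
  fix s :: real assume sp: "s > 0"
  obtain QL where QL: "(Q \<longlongrightarrow> QL) (at_left s)" using cQ sp unfolding cadlag_def by blast
  have "dist QL (Q s) \<le> 3 * r" if r: "r > 0" for r
  proof -
    have e1: "eventually (\<lambda>n. \<forall>u\<in>{0..s}. dist (qv_n t k x n (l n u)) (Q u) < r) sequentially"
      using U sp r unfolding uniform_limit_iff by auto
    have e2: "eventually (\<lambda>n. \<forall>i<k n. t n i \<le> s+1 \<longrightarrow> norm (x (t n (Suc i)) - x (t n i)) < sqrt r) sequentially"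
      using small_incr[OF ps cx, of "s+1" "sqrt r"] sp r by simp
    have e3: "eventually (\<lambda>n. \<forall>u\<in>{0..}. dist (l n u) u < 1) sequentially"
      using l(2) unfolding uniform_limit_iff by auto
    obtain n where n1: "\<forall>u\<in>{0..s}. dist (qv_n t k x n (l n u)) (Q u) < r"
      and n2: "\<forall>i<k n. t n i \<le> s+1 \<longrightarrow> norm (x (t n (Suc i)) - x (t n i)) < sqrt r"
      and n3: "\<forall>u\<in>{0..}. dist (l n u) u < 1"
      using eventually_happens[OF eventually_conj[OF e1 eventually_conj[OF e2 e3]]] by auto
    let ?L = "l n"
    let ?d = "\<lambda>i. outer (x (t n (Suc i)) - x (t n i)) (x (t n (Suc i)) - x (t n i))"
    have tc: "continuous_on {0..} ?L" "strict_mono_on {0..} ?L" using l(1) unfolding time_change_def by auto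
    have Ls: "?L s \<le> s + 1" using n3[rule_format, of s] sp by (auto simp: dist_real_def)
    have "isCont ?L s" using continuous_on_interior[OF tc(1)] sp by (simp add: interior_real_atLeast)
    then have Llim: "(?L \<longlongrightarrow> ?L s) (at_left s)"
      unfolding isCont_def by (rule tendsto_within_subset) auto
    have evpos: "eventually (\<lambda>v. 0 < v \<and> v < s) (at_left s)"
      unfolding eventually_at_left[OF sp] by (intro exI[of _ 0]) (use sp in auto)
    have Lfl: "filterlim ?L (at_left (?L s)) (at_left s)"
      unfolding filterlim_at
    proof
      show "eventually (\<lambda>v. ?L v \<in> {..<?L s} \<and> ?L v \<noteq> ?L s) (at_left s)"
        using evpos
      proof (rule eventually_mono)
        fix v assume "0 < v \<and> v < s"
        then have "?L v < ?L s" using tc(2) sp unfolding strict_mono_on_def by auto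
        then show "?L v \<in> {..<?L s} \<and> ?L v \<noteq> ?L s" by auto
      qed
    qed (rule Llim)
    define Sl where "Sl = (\<Sum>i\<in>{i\<in>{..<k n}. t n i < ?L s}. ?d i)"
    have evS: "eventually (\<lambda>v. qv_n t k x n (?L v) = Sl) (at_left s)"
    proof -
      have "eventually (\<lambda>y. {i\<in>{..<k n}. t n i \<le> y} = {i\<in>{..<k n}. t n i < ?L s}) (at_left (?L s))"
        by (rule step_left) simp
      from filterlim_iff[THEN iffD1, OF Lfl, rule_format, OF this]
      show ?thesis by (rule eventually_mono) (simp only: qv_n_def qv_set Sl_def)
    qed
    have jump: "dist Sl (qv_n t k x n (?L s)) < r"
    proof -
      let ?E = "{i\<in>{..<k n}. t n i = ?L s}"
      have seteq: "{i. i < k n \<and> t n i \<le> ?L s} = {i\<in>{..<k n}. t n i < ?L s} \<union> ?E" by auto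
      have "qv_n t k x n (?L s) = (\<Sum>i\<in>{i\<in>{..<k n}. t n i < ?L s} \<union> ?E. ?d i)"
        unfolding qv_n_def seteq ..
      also have "\<dots> = Sl + sum ?d ?E" unfolding Sl_def by (rule sum.union_disjoint) auto
      finally have "qv_n t k x n (?L s) = Sl + sum ?d ?E" .
      then have eq: "dist Sl (qv_n t k x n (?L s)) = norm (sum ?d ?E)"
        by (simp add: dist_norm norm_minus_commute)
      show ?thesis
      proof (cases "?E = {}")
        case True
        then have "sum ?d ?E = 0" by (simp only: sum.empty)
        then show ?thesis using eq r by (simp only: norm_zero)
      next
        case False
        then obtain i where i: "i \<in> ?E" by blast
        have "?E = {i}" using i ps_inj[OF ps, of _ n i] by auto
        then have "norm (sum ?d ?E) = norm (x (t n (Suc i)) - x (t n i)) * norm (x (t n (Suc i)) - x (t n i))"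
          by (simp add: norm_outer)
        also have "\<dots> < sqrt r * sqrt r"
          using n2 i Ls r by (intro mult_strict_mono) auto
        also have "\<dots> = r" using r by simp
        finally show ?thesis using eq by simp
      qed
    qed
    have "eventually (\<lambda>v. dist (Q v) (Q s) \<le> 3 * r) (at_left s)"
      using eventually_conj[OF evpos evS]
    proof (rule eventually_mono)
      fix v assume v: "(0 < v \<and> v < s) \<and> qv_n t k x n (?L v) = Sl"
      have a: "dist (qv_n t k x n (?L v)) (Q v) < r" using n1 v by auto
      have b: "dist (qv_n t k x n (?L s)) (Q s) < r" using n1 sp by auto
      have t1: "dist (Q v) (Q s) \<le> dist (Q v) Sl + dist Sl (Q s)" by (rule dist_triangle)
      have t2: "dist Sl (Q s) \<le> dist Sl (qv_n t k x n (?L s)) + dist (qv_n t k x n (?L s)) (Q s)"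
        by (rule dist_triangle)
      have a': "dist (Q v) Sl < r" using a v by (simp only: dist_commute)
      show "dist (Q v) (Q s) \<le> 3 * r" using t1 t2 a' b jump by linarith
    qed
    then show ?thesis
      by (intro tendsto_upperbound[OF tendsto_dist[OF QL tendsto_const]]) auto
  qed
  then have "QL = Q s"
  proof -
    assume H: "\<And>r. r > 0 \<Longrightarrow> dist QL (Q s) \<le> 3 * r"
    show "QL = Q s"
    proof (rule ccontr)
      assume "QL \<noteq> Q s"
      then have "dist QL (Q s) > 0" by simp
      from H[of "dist QL (Q s) / 4"] this show False by simp
    qed
  qed
  then show "continuous (at_left s) Q" unfolding continuous_within using QL by simp
qed



lemma cont_imp_unif:
  assumes ps: "partition_seq t k" and cx: "continuous_on {0..} x" and cQ: "cadlag Q"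
    and J: "J1_conv (qv_n t k x) Q" and T: "T \<ge> 0"
  shows "uniform_limit {0..T} (qv_n t k x) Q sequentially"
proof -
  obtain l where l: "\<forall>n. time_change (l n)" "uniform_limit {0..} l (\<lambda>t. t) sequentially"
    and U: "\<forall>T\<ge>0. uniform_limit {0..T} (\<lambda>n u. qv_n t k x n (l n u)) Q sequentially"
    using J unfolding J1_conv_def by blast
  have cQ': "continuous_on {0..} Q" by (rule Q_cont[OF ps cx cQ l U])
  have "uniformly_continuous_on {0..T+1} Q"
    by (rule compact_uniformly_continuous[OF continuous_on_subset[OF cQ']]) auto
  then have UC: "\<forall>e>0. \<exists>d>0. \<forall>u\<in>{0..T+1}. \<forall>v\<in>{0..T+1}. dist v u < d \<longrightarrow> dist (Q v) (Q u) < e"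
    unfolding uniformly_continuous_on_def by metis
  show ?thesis unfolding uniform_limit_iff
  proof (intro allI impI)
    fix r :: real assume r: "r > 0"
    obtain d where d: "d > 0" "\<And>u v. u \<in> {0..T+1} \<Longrightarrow> v \<in> {0..T+1} \<Longrightarrow> dist v u < d \<Longrightarrow> dist (Q v) (Q u) < r/2"
      using UC r by (metis half_gt_zero)
    have e1: "eventually (\<lambda>n. \<forall>w\<in>{0..T+1}. dist (qv_n t k x n (l n w)) (Q w) < r/2) sequentially"
    proof -
      have "uniform_limit {0..T+1} (\<lambda>n u. qv_n t k x n (l n u)) Q sequentially" using U T by simp
      then show ?thesis unfolding uniform_limit_iff using r by (meson half_gt_zero)
    qed
    have e2: "eventually (\<lambda>n. \<forall>u\<in>{0..}. dist (l n u) u < min d 1) sequentially"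
      using l(2) d(1) unfolding uniform_limit_iff by (meson min_less_iff_conj zero_less_one)
    show "eventually (\<lambda>n. \<forall>u\<in>{0..T}. dist (qv_n t k x n u) (Q u) < r) sequentially"
      using eventually_conj[OF e1 e2]
    proof (rule eventually_mono, intro ballI)
      fix n u
      assume H: "(\<forall>w\<in>{0..T+1}. dist (qv_n t k x n (l n w)) (Q w) < r/2) \<and> (\<forall>u\<in>{0..}. dist (l n u) u < min d 1)"
        and u: "u \<in> {0..T}"
      have "bij_betw (l n) {0..} {0..}" using l(1) unfolding time_change_def by blast
      then have "u \<in> l n ` {0..}" using u unfolding bij_betw_def by auto
      then obtain w where w: "w \<ge> 0" "l n w = u" by auto
      have wd: "dist w u < min d 1" using H w by (metis atLeast_iff dist_commute)
      then have wT: "w \<in> {0..T+1}" using w u by (auto simp: dist_real_def)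
      have uT: "u \<in> {0..T+1}" using u by auto
      have a: "dist (qv_n t k x n u) (Q w) < r/2" using H wT w(2) by auto
      have b: "dist (Q w) (Q u) < r/2" using d(2)[OF uT wT] wd by simp
      have "dist (qv_n t k x n u) (Q u) \<le> dist (qv_n t k x n u) (Q w) + dist (Q w) (Q u)"
        by (rule dist_triangle)
      then show "dist (qv_n t k x n u) (Q u) < r" using a b by linarith
    qed
  qed
qed

theorem corollary3p7:
  fixes t :: "nat \<Rightarrow> nat \<Rightarrow> real" and k :: "nat \<Rightarrow> nat"
    and x :: "real \<Rightarrow> real^'m" and Q :: "real \<Rightarrow> real^'m^'m"
  assumes "partition_seq t k"
    and "cadlag x"
    and "cadlag Q"
    and "J1_conv (qv_n t k x) Q"
  shows "((\<forall>T\<ge>0. uniform_limit {0..T} (qv_n t k x) Q sequentially) \<longleftrightarrow> continuous_on {0..} x)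
    \<and> (\<forall>F. J1_continuous_at F Q \<longrightarrow> (\<lambda>n. F (qv_n t k x n)) \<longlonglongrightarrow> F Q)"
  using unif_imp_cont[OF assms(1,2,3)] cont_imp_unif[OF assms(1) _ assms(3,4)] part2[OF assms(4)]
  by blast

end
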